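(* If a regular facets-pairing structure $\mathcal{F}$ on the cube $\mathcal{C}^n$ is perfect, then $\mathcal{F}$ is strong.
   Context: Let $[\pm n]=\{\pm1,\dots,\pm n\}$ and $\mathcal{C}^n=\{x\in\mathbb{R}^n: -\tfrac14\le x_i\le\tfrac14\}$. For $1\le i\le n$, $\mathbf{F}(i)$ and $\mathbf{F}(-i)$ denote the facets of $\mathcal{C}^n$ in $\{x_i=\tfrac14\}$ and $\{x_i=-\tfrac14\}$; for $j_1,\dots,j_s\in[\pm n]$ with distinct absolute values, $\mathbf{F}(j_1,\dots,j_s)=\bigcap_i\mathbf{F}(j_i)$ (every proper face has this form). A signed permutation is a bijection $\sigma$ of $[\pm n]$ with $\sigma(-k)=-\sigma(k)$. A facets-pairing structure on $\mathcal{C}^n$ is a pair $(\omega,\{\tau_j\})$ where $\omega$ is a bijection of $[\pm n]$ with $\omega\circ\omega=\mathrm{id}$ and $\tau_j:\mathbf{F}(j)\to\mathbf{F}(\omega(j))$ are face-preserving homeomorphisms with $\tau_{\omega(j)}=\tau_j^{-1}$, such that for all $|j|\ne|k|$, writing $\tau_j(\mathbf{F}(j,k))=\mathbf{F}(\omega(j),k')$ and $\tau_k(\mathbf{F}(j,k))=\mathbf{F}(j',\omega(k))$, one has $\tau_{k'}\tau_j(p)=\tau_{j'}\tau_k(p)$ for all $p\in\mathbf{F}(j,k)$. It is regular if each $\tau_j$ is a Euclidean isometry and $\omega$ is a signed permutation. A composition $\tau_{k_m}\circ\dots\circ\tau_{k_1}$ applied to a proper face $f$ is valid if $f\subset\mathbf{F}(k_1)$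 and $\tau_{k_i}\circ\dots\circ\tau_{k_1}(f)\subset\mathbf{F}(k_{i+1})$ for $1\le i<m$ ($m=0$ allowed, giving the identity). The face family $\widehat f$ is the set of faces $\tau_{k_m}\circ\dots\circ\tau_{k_1}(f)$ over all valid compositions. $\mathcal{F}$ is perfect if for every proper face $f$ of codimension $s$, $\widehat f$ has exactly $2^s$ elements. For a proper face $f$ let $\Xi(f)$ be the set of facets containing $f$. If $f\subset\mathbf{F}(k)$ and $f'=\tau_k(f)$, define the bijection $\Psi^f_k:\Xi(f)\to\Xi(f')$ by $\Psi^f_k(\mathbf{F}(k))=\mathbf{F}(\omega(k))$ and, for $F'\in\Xi(f)\setminus\{\mathbf{F}(k)\}$, $\Psi^f_k(F')$ is the facet $G$ with $G\cap\mathbf{F}(\omega(k))=\tau_k(F'\cap\mathbf{F}(k))$. $\mathcal{F}$ is strong if for every proper face $f$ and any two valid compositions $\tau_{k_m}\circ\dots\circ\tau_{k_1}$ and $\tau_{k'_r}\circ\dots\circ\tau_{k'_1}$ mapping $f$ onto the same face $\widetilde f$: (a) they agree at every point of $f$; and (b) the composites $\Psi^{f_m}_{k_m}\circ\dots\circ\Psi^{f_1}_{k_1}$ and $\Psi^{f'_r}_{k'_r}\circ\dots\circ\Psi^{f'_1}_{k'_1}$ coincide as maps $\Xi(f)\to\Xi(\widetilde f)$, where $f_1=f'_1=f$, $f_{i+1}=\tau_{k_i}\circ\dots\circ\tau_{k_1}(f)$, $f'_{i+1}=\tau_{k'_i}\circ\dots\circ\tau_{k'_1}(f)$. *)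

theory Defs
  imports "HOL-Analysis.Analysis"
begin

text \<open>The cube C^n lives in real^'n, n = CARD('n). A signed index in [+-n] is a pair
 (i, b) :: 'n \<times> bool, standing for +i if b = True and for -i if b = False.\<close>

type_synonym 'n sidx = "'n \<times> bool"

definition sneg :: "'n sidx \<Rightarrow> 'n sidx" where
  "sneg j = (fst j, \<not> snd j)"

definition cube :: "(real^'n) set" where
  "cube = {x. \<forall>i. - (1/4) \<le> x$i \<and> x$i \<le> 1/4}"

definition facet :: "'n sidx \<Rightarrow> (real^'n) set" where
  "facet j = {x \<in> cube. x $ fst j = (if snd j then 1/4 else - (1/4))}"

definition distinct_abs :: "'n sidx set \<Rightarrow> bool" where
  "distinct_abs S \<longleftrightarrow> (\<forall>j\<in>S. \<forall>k\<in>S. fst j = fst k \<longrightarrow> j = k)"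

definition face :: "'n sidx set \<Rightarrow> (real^'n) set" where
  "face S = cube \<inter> \<Inter> (facet ` S)"

definition proper_face :: "(real^'n) set \<Rightarrow> bool" where
  "proper_face f \<longleftrightarrow> (\<exists>S. S \<noteq> {} \<and> distinct_abs S \<and> f = face S)"

definition Xi :: "(real^'n) set \<Rightarrow> (real^'n) set set" where
  "Xi f = {F \<in> range facet. f \<subseteq> F}"

definition codim :: "(real^'n) set \<Rightarrow> nat" where
  "codim f = card {j. f \<subseteq> facet j}"

definition face_preserving :: "'n sidx \<Rightarrow> (real^'n \<Rightarrow> real^'n) \<Rightarrow> bool" where
  "face_preserving j t \<longleftrightarrow>
     (\<forall>f. proper_face f \<and> f \<subseteq> facet j \<longrightarrow> proper_face (t ` f))"

definition facets_pairing ::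
  "('n sidx \<Rightarrow> 'n sidx) \<Rightarrow> ('n sidx \<Rightarrow> real^'n \<Rightarrow> real^'n) \<Rightarrow> bool" where
  "facets_pairing \<omega> \<tau> \<longleftrightarrow>
     bij \<omega> \<and> (\<forall>j. \<omega> (\<omega> j) = j) \<and>
     (\<forall>j. homeomorphism (facet j) (facet (\<omega> j)) (\<tau> j) (\<tau> (\<omega> j))
          \<and> face_preserving j (\<tau> j)) \<and>
     (\<forall>j k j' k'. fst j \<noteq> fst k \<longrightarrow> fst k' \<noteq> fst (\<omega> j) \<longrightarrow> fst j' \<noteq> fst (\<omega> k) \<longrightarrow>
        \<tau> j ` (facet j \<inter> facet k) = facet (\<omega> j) \<inter> facet k' \<longrightarrow>
        \<tau> k ` (facet j \<inter> facet k) = facet j' \<inter> facet (\<omega> k) \<longrightarrow>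
        (\<forall>p \<in> facet j \<inter> facet k. \<tau> k' (\<tau> j p) = \<tau> j' (\<tau> k p)))"

definition regular_fp ::
  "('n sidx \<Rightarrow> 'n sidx) \<Rightarrow> ('n sidx \<Rightarrow> real^'n \<Rightarrow> real^'n) \<Rightarrow> bool" where
  "regular_fp \<omega> \<tau> \<longleftrightarrow> facets_pairing \<omega> \<tau> \<and>
     (\<forall>j. \<forall>x\<in>facet j. \<forall>y\<in>facet j. dist (\<tau> j x) (\<tau> j y) = dist x y) \<and>
     (\<forall>j. \<omega> (sneg j) = sneg (\<omega> j))"

text \<open>Compositions tau_{k_m} o ... o tau_{k_1}, given by the list [k_1, ..., k_m].\<close>
fun comp_seq :: "('n sidx \<Rightarrow> real^'n \<Rightarrow> real^'n) \<Rightarrow> 'n sidx list \<Rightarrow> real^'n \<Rightarrow> real^'n" where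
  "comp_seq \<tau> [] = id"
| "comp_seq \<tau> (k # ks) = comp_seq \<tau> ks \<circ> \<tau> k"

fun valid_seq :: "('n sidx \<Rightarrow> real^'n \<Rightarrow> real^'n) \<Rightarrow> (real^'n) set \<Rightarrow> 'n sidx list \<Rightarrow> bool" where
  "valid_seq \<tau> f [] = True"
| "valid_seq \<tau> f (k # ks) = (f \<subseteq> facet k \<and> valid_seq \<tau> (\<tau> k ` f) ks)"

definition face_family ::
  "('n sidx \<Rightarrow> real^'n \<Rightarrow> real^'n) \<Rightarrow> (real^'n) set \<Rightarrow> (real^'n) set set" where
  "face_family \<tau> f = {comp_seq \<tau> ks ` f | ks. valid_seq \<tau> f ks}"

definition perfect :: "('n sidx \<Rightarrow> real^'n \<Rightarrow> real^'n) \<Rightarrow> bool" where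
  "perfect \<tau> \<longleftrightarrow> (\<forall>f. proper_face f \<longrightarrow> card (face_family \<tau> f) = 2 ^ codim f)"

text \<open>Psi^f_k on facets containing f (the dependence on f is only through the domain Xi(f)).\<close>
definition Psi ::
  "('n sidx \<Rightarrow> 'n sidx) \<Rightarrow> ('n sidx \<Rightarrow> real^'n \<Rightarrow> real^'n) \<Rightarrow> 'n sidx
     \<Rightarrow> (real^'n) set \<Rightarrow> (real^'n) set" where
  "Psi \<omega> \<tau> k F' = (if F' = facet k then facet (\<omega> k)
      else (THE G. G \<in> range facet \<and> G \<inter> facet (\<omega> k) = \<tau> k ` (F' \<inter> facet k)))"

fun Psi_seq ::
  "('n sidx \<Rightarrow> 'n sidx) \<Rightarrow> ('n sidx \<Rightarrow> real^'n \<Rightarrow> real^'n) \<Rightarrow> 'n sidx list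
     \<Rightarrow> (real^'n) set \<Rightarrow> (real^'n) set" where
  "Psi_seq \<omega> \<tau> [] = id"
| "Psi_seq \<omega> \<tau> (k # ks) = Psi_seq \<omega> \<tau> ks \<circ> Psi \<omega> \<tau> k"

definition strong ::
  "('n sidx \<Rightarrow> 'n sidx) \<Rightarrow> ('n sidx \<Rightarrow> real^'n \<Rightarrow> real^'n) \<Rightarrow> bool" where
  "strong \<omega> \<tau> \<longleftrightarrow>
     (\<forall>f ks ks'. proper_face f \<and> valid_seq \<tau> f ks \<and> valid_seq \<tau> f ks' \<and>
        comp_seq \<tau> ks ` f = comp_seq \<tau> ks' ` f \<longrightarrow>
        (\<forall>p\<in>f. comp_seq \<tau> ks p = comp_seq \<tau> ks' p) \<and>
        (\<forall>F\<in>Xi f. Psi_seq \<omega> \<tau> ks F = Psi_seq \<omega> \<tau> ks' F))"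

end

theory Submission
  imports Defs
begin


definition cpt :: "'n::finite sidx set \<Rightarrow> real^'n" where
  "cpt S = (\<chi> i. if \<exists>s\<in>S. fst s = i then (if snd (SOME s. s\<in>S \<and> fst s = i) then 1/4 else - (1/4)) else 0)"

lemma cpt_in_face:
  assumes "distinct_abs S" shows "cpt S \<in> face S"
proof -
  have c: "cpt S \<in> cube" unfolding cube_def cpt_def by auto
  have "cpt S \<in> facet s" if s: "s \<in> S" for s
  proof -
    have ex: "\<exists>s'\<in>S. fst s' = fst s" using s by blast
    have "(SOME s'. s'\<in>S \<and> fst s' = fst s) \<in> S \<and> fst (SOME s'. s'\<in>S \<and> fst s' = fst s) = fst s"
      by (rule someI[of _ s]) (use s in auto)
    hence "(SOME s'. s'\<in>S \<and> fst s' = fst s) = s" using assms s unfolding distinct_abs_def by blast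
    thus ?thesis using c ex unfolding facet_def cpt_def by auto
  qed
  thus ?thesis using c unfolding face_def by auto
qed

lemma face_sub_imp:
  assumes "distinct_abs S" "face S \<subseteq> face T" shows "T \<subseteq> S"
proof
  fix t assume t: "t \<in> T"
  have "cpt S \<in> facet t" using cpt_in_face[OF assms(1)] assms(2) t unfolding face_def by auto
  hence v: "cpt S $ fst t = (if snd t then 1/4 else - (1/4))" unfolding facet_def by auto
  have ex: "\<exists>s\<in>S. fst s = fst t"
  proof (rule ccontr)
    assume "\<not> ?thesis" hence "cpt S $ fst t = 0" unfolding cpt_def by auto
    with v show False by (auto split: if_splits)
  qed
  define s0 where "s0 = (SOME s. s\<in>S \<and> fst s = fst t)"
  have s0: "s0 \<in> S \<and> fst s0 = fst t" unfolding s0_def using ex by (metis (mono_tags, lifting) someI_ex)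
  have "cpt S $ fst t = (if snd s0 then 1/4 else - (1/4))" using ex unfolding cpt_def s0_def by auto
  with v have "snd s0 = snd t" by (auto split: if_splits)
  with s0 have "s0 = t" by (simp add: prod_eq_iff)
  with s0 show "t \<in> S" by simp
qed

lemma face_eq_imp: "distinct_abs S \<Longrightarrow> distinct_abs T \<Longrightarrow> face S = face T \<Longrightarrow> S = T"
  using face_sub_imp by (metis equalityI order_refl)

lemma facet_opp_disj: "fst a = fst b \<Longrightarrow> a \<noteq> b \<Longrightarrow> facet a \<inter> facet b = {}"
proof (rule ccontr)
  assume h: "fst a = fst b" "a \<noteq> b" "facet a \<inter> facet b \<noteq> {}"
  then obtain x where "x \<in> facet a" "x \<in> facet b" by blast
  hence "x $ fst a = (if snd a then 1/4 else - (1/4))" "x $ fst a = (if snd b then 1/4 else - (1/4))"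
    using h(1) unfolding facet_def by auto
  hence "snd a = snd b" by (auto split: if_splits)
  with h show False by (simp add: prod_eq_iff)
qed

lemma face_nonempty_distinct: "face S \<noteq> {} \<Longrightarrow> distinct_abs S"
  unfolding distinct_abs_def
proof (intro ballI impI, rule ccontr)
  fix j k assume h: "face S \<noteq> {}" "j \<in> S" "k \<in> S" "fst j = fst k" "j \<noteq> k"
  hence "face S \<subseteq> facet j \<inter> facet k" unfolding face_def by auto
  with facet_opp_disj[OF h(4,5)] h(1) show False by auto
qed

lemma face_single[simp]: "face {j} = facet j" unfolding face_def facet_def by auto
lemma face_two: "face {a,b} = facet a \<inter> facet b" unfolding face_def facet_def by auto
lemma face_Un: "face (A \<union> B) = face A \<inter> face B" unfolding face_def by auto
lemma face_insert: "face (insert a B) = facet a \<inter> face B" unfolding face_def facet_def by auto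
lemma facet_cube: "facet j \<subseteq> cube" unfolding facet_def by auto

lemma distinct_abs_single[simp]: "distinct_abs {j}" unfolding distinct_abs_def by auto
lemma distinct_abs_two: "fst a \<noteq> fst b \<Longrightarrow> distinct_abs {a,b}" unfolding distinct_abs_def by auto
lemma distinct_abs_subset: "distinct_abs S \<Longrightarrow> T \<subseteq> S \<Longrightarrow> distinct_abs T" unfolding distinct_abs_def by blast

lemma facet_nonempty: "facet j \<noteq> {}" using cpt_in_face[of "{j}"] by auto

lemma facet_inj: "facet j = facet k \<Longrightarrow> j = k"
  using face_eq_imp[of "{j}" "{k}"] by auto

lemma face_sub_facet_iff: "distinct_abs S \<Longrightarrow> face S \<subseteq> facet j \<longleftrightarrow> j \<in> S"
  using face_sub_imp[of S "{j}"] unfolding face_def by auto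

lemma face_antimono: "T \<subseteq> S \<Longrightarrow> face S \<subseteq> face T" unfolding face_def by auto

lemma Xi_face: "distinct_abs S \<Longrightarrow> Xi (face S) = facet ` S"
proof -
  assume d: "distinct_abs S"
  have e: "\<And>j. face S \<subseteq> facet j \<longleftrightarrow> j \<in> S" by (rule face_sub_facet_iff[OF d])
  show ?thesis unfolding Xi_def
  proof (rule set_eqI)
    fix F show "F \<in> {F \<in> range facet. face S \<subseteq> F} \<longleftrightarrow> F \<in> facet ` S" using e by auto
  qed
qed

lemma codim_face: "distinct_abs S \<Longrightarrow> codim (face S) = card S"
proof -
  assume d: "distinct_abs S"
  have "{j. face S \<subseteq> facet j} = S" using face_sub_facet_iff[OF d] by auto
  thus ?thesis unfolding codim_def by simp
qed

lemma proper_face_nonempty: "proper_face f \<Longrightarrow> f \<noteq> {}"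
  unfolding proper_face_def using cpt_in_face by (metis empty_iff)

lemma sub_two_facets: "f \<noteq> {} \<Longrightarrow> f \<subseteq> facet a \<Longrightarrow> f \<subseteq> facet b \<Longrightarrow> a \<noteq> b \<Longrightarrow> fst a \<noteq> fst b"
  using facet_opp_disj[of a b] by auto



locale fp =
  fixes \<omega> :: "'n::finite sidx \<Rightarrow> 'n sidx" and \<tau> :: "'n sidx \<Rightarrow> real^'n \<Rightarrow> real^'n"
  assumes FP: "facets_pairing \<omega> \<tau>"
begin

lemma om[simp]: "\<omega> (\<omega> j) = j" using FP unfolding facets_pairing_def by blast
lemma hom: "homeomorphism (facet j) (facet (\<omega> j)) (\<tau> j) (\<tau> (\<omega> j))"
  using FP unfolding facets_pairing_def by blast
lemma fpres: "proper_face g \<Longrightarrow> g \<subseteq> facet j \<Longrightarrow> proper_face (\<tau> j ` g)"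
  using FP unfolding facets_pairing_def face_preserving_def by blast
lemma cyc: "fst j \<noteq> fst k \<Longrightarrow> fst k' \<noteq> fst (\<omega> j) \<Longrightarrow> fst j' \<noteq> fst (\<omega> k) \<Longrightarrow>
        \<tau> j ` (facet j \<inter> facet k) = facet (\<omega> j) \<inter> facet k' \<Longrightarrow>
        \<tau> k ` (facet j \<inter> facet k) = facet j' \<inter> facet (\<omega> k) \<Longrightarrow>
        p \<in> facet j \<inter> facet k \<Longrightarrow> \<tau> k' (\<tau> j p) = \<tau> j' (\<tau> k p)"
  using FP unfolding facets_pairing_def by blast

lemma om_inj: "\<omega> a = \<omega> b \<Longrightarrow> a = b" by (metis om)

lemma t_in: "p \<in> facet k \<Longrightarrow> \<tau> k p \<in> facet (\<omega> k)"
  using hom[of k] unfolding homeomorphism_def by blast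
lemma t_back: "p \<in> facet k \<Longrightarrow> \<tau> (\<omega> k) (\<tau> k p) = p"
  using hom[of k] unfolding homeomorphism_def by blast
lemma t_img: "\<tau> k ` facet k = facet (\<omega> k)"
  using hom[of k] unfolding homeomorphism_def by blast
lemma t_inj: "inj_on (\<tau> k) (facet k)"
  by (metis inj_on_inverseI t_back)
lemma t_img_sub: "g \<subseteq> facet k \<Longrightarrow> \<tau> k ` g \<subseteq> facet (\<omega> k)"
  using t_in by blast
lemma t_back_img: "g \<subseteq> facet k \<Longrightarrow> \<tau> (\<omega> k) ` \<tau> k ` g = g"
proof -
  assume g: "g \<subseteq> facet k"
  have "\<tau> (\<omega> k) ` \<tau> k ` g = (\<tau> (\<omega> k) \<circ> \<tau> k) ` g" by (simp add: image_comp)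
  also have "\<dots> = id ` g" using g t_back[of _ k] by (intro image_cong) auto
  finally show ?thesis by simp
qed
lemma t_back_img': "h \<subseteq> facet (\<omega> k) \<Longrightarrow> \<tau> k ` \<tau> (\<omega> k) ` h = h"
  using t_back_img[of h "\<omega> k"] by simp

lemma proper_faceE:
  assumes "proper_face g" obtains S where "distinct_abs S" "S \<noteq> {}" "g = face S"
  using assms unfolding proper_face_def by blast

lemma proper_face_face: "distinct_abs S \<Longrightarrow> S \<noteq> {} \<Longrightarrow> proper_face (face S)"
  unfolding proper_face_def by blast

lemma R3_ex:
  assumes mk: "fst m \<noteq> fst k"
  shows "\<exists>m'. fst m' \<noteq> fst (\<omega> k) \<and> \<tau> k ` (facet k \<inter> facet m) = facet (\<omega> k) \<inter> facet m'"
proof -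
  define g where "g = face {k,m}"
  have dkm: "distinct_abs {k,m}" using mk by (simp add: distinct_abs_two)
  have g2: "g = facet k \<inter> facet m" unfolding g_def face_two by simp
  have gk: "g \<subseteq> facet k" using g2 by auto
  have pg: "proper_face g" unfolding g_def using dkm by (intro proper_face_face) auto
  have "proper_face (\<tau> k ` g)" by (rule fpres[OF pg gk])
  then obtain S' where S': "distinct_abs S'" "S' \<noteq> {}" "\<tau> k ` g = face S'" by (rule proper_faceE)
  have "face S' \<subseteq> facet (\<omega> k)" using S'(3) t_img_sub[OF gk] by simp
  hence okS: "\<omega> k \<in> S'" using face_sub_facet_iff[OF S'(1)] by simp
  have "\<exists>m'\<in>S'. m' \<noteq> \<omega> k"
  proof (rule ccontr)
    assume "\<not> ?thesis"
    hence "S' = {\<omega> k}" using okS by blast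
    hence H: "\<tau> k ` g = \<tau> k ` facet k" using S'(3) t_img by simp
    have "g = \<tau> (\<omega> k) ` \<tau> k ` g" using t_back_img[OF gk] by simp
    also have "\<dots> = \<tau> (\<omega> k) ` \<tau> k ` facet k" using H by simp
    also have "\<dots> = facet k" by (rule t_back_img) simp
    finally have "g = facet k" .
    hence "face {k,m} = face {k}" unfolding g_def by simp
    hence "{k,m} = {k}" by (rule face_eq_imp[OF dkm distinct_abs_single])
    thus False using mk by auto
  qed
  then obtain m' where m': "m' \<in> S'" "m' \<noteq> \<omega> k" by blast
  have fm': "fst m' \<noteq> fst (\<omega> k)" using S'(1) m'(1,2) okS unfolding distinct_abs_def by metis
  define h where "h = face {\<omega> k, m'}"
  have dh: "distinct_abs {\<omega> k, m'}" using fm' by (simp add: distinct_abs_two)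
  have h2: "h = facet (\<omega> k) \<inter> facet m'" unfolding h_def face_two by simp
  have hk: "h \<subseteq> facet (\<omega> k)" using h2 by auto
  have ph: "proper_face h" unfolding h_def using dh by (intro proper_face_face) auto
  have "S' = {\<omega> k, m'}"
  proof (rule ccontr)
    assume ne: "S' \<noteq> {\<omega> k, m'}"
    have sub: "{\<omega> k, m'} \<subseteq> S'" using okS m' by auto
    have "proper_face (\<tau> (\<omega> k) ` h)" using fpres[OF ph hk] .
    then obtain T where T: "distinct_abs T" "T \<noteq> {}" "\<tau> (\<omega> k) ` h = face T" by (rule proper_faceE)
    have "face S' \<subseteq> h" unfolding h_def by (rule face_antimono[OF sub])
    hence "\<tau> (\<omega> k) ` \<tau> k ` g \<subseteq> \<tau> (\<omega> k) ` h" using S'(3) by (simp add: image_mono)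
    hence "g \<subseteq> face T" unfolding t_back_img[OF gk] T(3) .
    hence "face {k,m} \<subseteq> face T" unfolding g_def .
    hence Tsub: "T \<subseteq> {k,m}" by (rule face_sub_imp[OF dkm])
    have "face T \<subseteq> facet k" using T(3) t_img_sub[OF hk] by simp
    hence kT: "k \<in> T" using face_sub_facet_iff[OF T(1)] by simp
    show False
    proof (cases "m \<in> T")
      case False
      hence "T = {k}" using Tsub kT by auto
      hence H: "\<tau> (\<omega> k) ` h = facet k" using T(3) by simp
      have "h = \<tau> k ` \<tau> (\<omega> k) ` h" using t_back_img'[OF hk] by simp
      also have "\<dots> = \<tau> k ` facet k" using H by simp
      also have "\<dots> = facet (\<omega> k)" by (rule t_img)
      finally have "h = facet (\<omega> k)" .
      hence "face {\<omega> k, m'} = face {\<omega> k}" unfolding h_def by simp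
      hence "{\<omega> k, m'} = {\<omega> k}" by (rule face_eq_imp[OF dh distinct_abs_single])
      thus False using m' by auto
    next
      case True
      hence "T = {k,m}" using Tsub kT by auto
      hence H: "\<tau> (\<omega> k) ` h = g" using T(3) g_def by simp
      have "h = \<tau> k ` \<tau> (\<omega> k) ` h" using t_back_img'[OF hk] by simp
      also have "\<dots> = \<tau> k ` g" using H by simp
      also have "\<dots> = face S'" by (rule S'(3))
      finally have "h = face S'" .
      hence "S' = {\<omega> k, m'}" using face_eq_imp[OF dh S'(1)] h_def by simp
      thus False using ne by simp
    qed
  qed
  hence "\<tau> k ` (facet k \<inter> facet m) = facet (\<omega> k) \<inter> facet m'" using S'(3) g2 face_two by simp
  thus ?thesis using fm' by blast
qed

end


context fp begin

definition psi :: "'n sidx \<Rightarrow> 'n sidx \<Rightarrow> 'n sidx" where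
  "psi k m = (if m = k then \<omega> k else
     (THE m'. fst m' \<noteq> fst (\<omega> k) \<and> \<tau> k ` (facet k \<inter> facet m) = facet (\<omega> k) \<inter> facet m'))"

definition D :: "'n sidx \<Rightarrow> 'n sidx set" where
  "D k = {m. m = k \<or> fst m \<noteq> fst k}"

lemma R3_uniq:
  assumes "fst a \<noteq> fst c" "fst b \<noteq> fst c" "facet c \<inter> facet a = facet c \<inter> facet b"
  shows "a = b"
proof -
  have "face {c,a} = face {c,b}" using assms(3) by (simp add: face_two)
  moreover have "distinct_abs {c,a}" "distinct_abs {c,b}" using assms(1,2) by (auto intro: distinct_abs_two)
  ultimately have "{c,a} = {c,b}" using face_eq_imp by blast
  thus ?thesis using assms(1) by (metis doubleton_eq_iff)
qed

lemma psi_prop: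
  assumes "fst m \<noteq> fst k"
  shows "fst (psi k m) \<noteq> fst (\<omega> k) \<and> \<tau> k ` (facet k \<inter> facet m) = facet (\<omega> k) \<inter> facet (psi k m)"
proof -
  have mk: "m \<noteq> k" using assms by auto
  obtain m' where m': "fst m' \<noteq> fst (\<omega> k)" "\<tau> k ` (facet k \<inter> facet m) = facet (\<omega> k) \<inter> facet m'"
    using R3_ex[OF assms] by blast
  have "(THE m'. fst m' \<noteq> fst (\<omega> k) \<and> \<tau> k ` (facet k \<inter> facet m) = facet (\<omega> k) \<inter> facet m') = m'"
  proof (rule the_equality)
    show "fst m' \<noteq> fst (\<omega> k) \<and> \<tau> k ` (facet k \<inter> facet m) = facet (\<omega> k) \<inter> facet m'" using m' by blast
  next
    fix x assume "fst x \<noteq> fst (\<omega> k) \<and> \<tau> k ` (facet k \<inter> facet m) = facet (\<omega> k) \<inter> facet x"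
    thus "x = m'" using m' R3_uniq[of x "\<omega> k" m'] by metis
  qed
  thus ?thesis using m' mk unfolding psi_def by simp
qed

lemma psi_self[simp]: "psi k k = \<omega> k" unfolding psi_def by simp

lemma D_self[simp]: "k \<in> D k" unfolding D_def by simp

lemma psi_dom: "m \<in> D k \<Longrightarrow> psi k m \<in> D (\<omega> k)"
proof -
  assume m: "m \<in> D k"
  show ?thesis
  proof (cases "m = k")
    case True thus ?thesis by simp
  next
    case False
    hence "fst m \<noteq> fst k" using m unfolding D_def by simp
    thus ?thesis using psi_prop unfolding D_def by blast
  qed
qed

lemma psi_back: "m \<in> D k \<Longrightarrow> psi (\<omega> k) (psi k m) = m"
proof -
  assume m: "m \<in> D k"
  show ?thesis
  proof (cases "m = k")
    case True thus ?thesis by simp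
  next
    case False
    hence fm: "fst m \<noteq> fst k" using m unfolding D_def by simp
    define m' where "m' = psi k m"
    have P: "fst m' \<noteq> fst (\<omega> k)" "\<tau> k ` (facet k \<inter> facet m) = facet (\<omega> k) \<inter> facet m'"
      using psi_prop[OF fm] unfolding m'_def by auto
    have P2: "fst (psi (\<omega> k) m') \<noteq> fst k"
      "\<tau> (\<omega> k) ` (facet (\<omega> k) \<inter> facet m') = facet k \<inter> facet (psi (\<omega> k) m')"
      using psi_prop[OF P(1)] by auto
    have "\<tau> (\<omega> k) ` (facet (\<omega> k) \<inter> facet m') = facet k \<inter> facet m"
      using P(2)[symmetric] t_back_img[of "facet k \<inter> facet m" k] by simp
    hence "facet k \<inter> facet (psi (\<omega> k) m') = facet k \<inter> facet m" using P2(2) by simp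
    hence "psi (\<omega> k) m' = m" using R3_uniq[OF P2(1) fm] by blast
    thus ?thesis unfolding m'_def .
  qed
qed

lemma psi_inj: "inj_on (psi k) (D k)"
  by (rule inj_on_inverseI[where g = "psi (\<omega> k)"]) (rule psi_back)

lemma distinct_sub_D: "distinct_abs S \<Longrightarrow> k \<in> S \<Longrightarrow> S \<subseteq> D k"
  unfolding distinct_abs_def D_def by blast

lemma face_nonempty: "distinct_abs S \<Longrightarrow> face S \<noteq> {}"
  using cpt_in_face by blast

lemma R5:
  assumes S: "distinct_abs S" and kS: "k \<in> S"
  shows "\<tau> k ` face S = face (psi k ` S)"
proof
  show "\<tau> k ` face S \<subseteq> face (psi k ` S)"
  proof
    fix q assume "q \<in> \<tau> k ` face S"
    then obtain p where p: "p \<in> face S" "q = \<tau> k p" by blast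
    have pk: "p \<in> facet k" using p(1) kS unfolding face_def by blast
    have qk: "q \<in> facet (\<omega> k)" using t_in[OF pk] p(2) by simp
    have "q \<in> facet (psi k m)" if mS: "m \<in> S" for m
    proof (cases "m = k")
      case True thus ?thesis using qk by simp
    next
      case False
      hence fm: "fst m \<noteq> fst k" using S mS kS unfolding distinct_abs_def by blast
      have "p \<in> facet k \<inter> facet m" using p(1) mS pk unfolding face_def by blast
      hence "q \<in> \<tau> k ` (facet k \<inter> facet m)" using p(2) by blast
      thus ?thesis using psi_prop[OF fm] by blast
    qed
    thus "q \<in> face (psi k ` S)" using qk facet_cube unfolding face_def by blast
  qed
next
  show "face (psi k ` S) \<subseteq> \<tau> k ` face S"
  proof
    fix q assume q: "q \<in> face (psi k ` S)"
    have qk: "q \<in> facet (\<omega> k)" using q kS unfolding face_def by (metis IntE INT_iff imageI psi_self)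
    define p where "p = \<tau> (\<omega> k) q"
    have pk: "p \<in> facet k" using t_in[OF qk] unfolding p_def by simp
    have qp: "\<tau> k p = q" using t_back[OF qk] unfolding p_def by simp
    have "p \<in> facet m" if mS: "m \<in> S" for m
    proof (cases "m = k")
      case True thus ?thesis using pk by simp
    next
      case False
      hence fm: "fst m \<noteq> fst k" using S mS kS unfolding distinct_abs_def by blast
      have "q \<in> facet (psi k m)" using q mS unfolding face_def by blast
      hence "q \<in> \<tau> k ` (facet k \<inter> facet m)" using qk psi_prop[OF fm] by blast
      then obtain p' where p': "p' \<in> facet k \<inter> facet m" "q = \<tau> k p'" by blast
      have "p' = p" unfolding p_def p'(2) using t_back[of p' k] p'(1) by simp
      thus ?thesis using p'(1) by blast
    qed
    hence "p \<in> face S" using pk facet_cube unfolding face_def by blast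
    thus "q \<in> \<tau> k ` face S" using qp by blast
  qed
qed

lemma R5':
  assumes S: "distinct_abs S" and kS: "k \<in> S"
  shows "\<tau> k ` face S = face (psi k ` S)" "distinct_abs (psi k ` S)"
proof -
  show e: "\<tau> k ` face S = face (psi k ` S)" by (rule R5[OF assms])
  have "face S \<noteq> {}" by (rule face_nonempty[OF S])
  hence "face (psi k ` S) \<noteq> {}" unfolding e[symmetric] by blast
  thus "distinct_abs (psi k ` S)" by (rule face_nonempty_distinct)
qed

lemma Psi_facet:
  assumes m: "m \<in> D k"
  shows "Psi \<omega> \<tau> k (facet m) = facet (psi k m)"
proof (cases "m = k")
  case True thus ?thesis unfolding Psi_def by simp
next
  case False
  hence fm: "fst m \<noteq> fst k" using m unfolding D_def by simp
  have ne: "facet m \<noteq> facet k" using False facet_inj by blast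
  define m' where "m' = psi k m"
  have P: "fst m' \<noteq> fst (\<omega> k)" "\<tau> k ` (facet k \<inter> facet m) = facet (\<omega> k) \<inter> facet m'"
    using psi_prop[OF fm] unfolding m'_def by auto
  have "(THE G. G \<in> range facet \<and> G \<inter> facet (\<omega> k) = \<tau> k ` (facet m \<inter> facet k)) = facet m'"
  proof (rule the_equality)
    show "facet m' \<in> range facet \<and> facet m' \<inter> facet (\<omega> k) = \<tau> k ` (facet m \<inter> facet k)"
      using P(2) by (simp add: Int_commute)
  next
    fix G assume G: "G \<in> range facet \<and> G \<inter> facet (\<omega> k) = \<tau> k ` (facet m \<inter> facet k)"
    then obtain g where g: "G = facet g" by blast
    have eq: "face {g, \<omega> k} = face {\<omega> k, m'}" using G P(2) g by (simp add: face_two Int_commute)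
    have d2: "distinct_abs {\<omega> k, m'}" using P(1) by (simp add: distinct_abs_two)
    have "face {g, \<omega> k} \<noteq> {}" using eq face_nonempty[OF d2] by simp
    hence d1: "distinct_abs {g, \<omega> k}" by (rule face_nonempty_distinct)
    have "{g, \<omega> k} = {\<omega> k, m'}" by (rule face_eq_imp[OF d1 d2 eq])
    moreover have "m' \<noteq> \<omega> k" using P(1) by auto
    ultimately have "g = m'" by (metis doubleton_eq_iff)
    thus "G = facet m'" using g by simp
  qed
  thus ?thesis using ne unfolding Psi_def m'_def by simp
qed

end


context fp begin

lemma Xi_facetE: "F \<in> Xi g \<Longrightarrow> (\<And>m. F = facet m \<Longrightarrow> g \<subseteq> facet m \<Longrightarrow> P) \<Longrightarrow> P"
  unfolding Xi_def by blast

lemma SL_bij: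
  assumes g: "proper_face g" and gk: "g \<subseteq> facet k"
  shows "bij_betw (Psi \<omega> \<tau> k) (Xi g) (Xi (\<tau> k ` g))"
proof -
  obtain S where S: "distinct_abs S" "S \<noteq> {}" "g = face S" using g by (rule proper_faceE)
  have kS: "k \<in> S" using gk S face_sub_facet_iff by blast
  have SD: "S \<subseteq> D k" by (rule distinct_sub_D[OF S(1) kS])
  note R = R5'[OF S(1) kS]
  have X1: "Xi g = facet ` S" using S Xi_face by simp
  have X2: "Xi (\<tau> k ` g) = facet ` psi k ` S" using R S(3) Xi_face by simp
  have img: "Psi \<omega> \<tau> k ` facet ` S = facet ` psi k ` S"
  proof -
    have "Psi \<omega> \<tau> k ` facet ` S = (\<lambda>m. facet (psi k m)) ` S"
      unfolding image_image
    proof (rule image_cong)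
      fix x assume "x \<in> S" thus "Psi \<omega> \<tau> k (facet x) = facet (psi k x)" using SD by (intro Psi_facet) blast
    qed simp
    thus ?thesis by (simp add: image_image)
  qed
  have inj: "inj_on (Psi \<omega> \<tau> k) (facet ` S)"
  proof (rule inj_onI)
    fix x y assume "x \<in> facet ` S" "y \<in> facet ` S" "Psi \<omega> \<tau> k x = Psi \<omega> \<tau> k y"
    then obtain a b where ab: "a \<in> S" "b \<in> S" "x = facet a" "y = facet b"
      "Psi \<omega> \<tau> k (facet a) = Psi \<omega> \<tau> k (facet b)" by blast
    moreover have "Psi \<omega> \<tau> k (facet a) = facet (psi k a)" using SD ab(1) by (intro Psi_facet) blast
    moreover have "Psi \<omega> \<tau> k (facet b) = facet (psi k b)" using SD ab(2) by (intro Psi_facet) blast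
    ultimately have "facet (psi k a) = facet (psi k b)" by simp
    hence "psi k a = psi k b" by (rule facet_inj)
    hence "a = b" using psi_inj SD ab(1,2) by (meson inj_on_def subsetD)
    thus "x = y" using ab by simp
  qed
  show ?thesis unfolding bij_betw_def X1 X2 using inj img by simp
qed

lemma SL_face: "proper_face g \<Longrightarrow> g \<subseteq> facet k \<Longrightarrow> proper_face (\<tau> k ` g)"
  by (rule fpres)

lemma SL_cancel:
  assumes g: "proper_face g" and gk: "g \<subseteq> facet k" and F: "F \<in> Xi g"
  shows "Psi \<omega> \<tau> (\<omega> k) (Psi \<omega> \<tau> k F) = F"
proof -
  obtain S where S: "distinct_abs S" "S \<noteq> {}" "g = face S" using g by (rule proper_faceE)
  have kS: "k \<in> S" using gk S face_sub_facet_iff by blast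
  have SD: "S \<subseteq> D k" by (rule distinct_sub_D[OF S(1) kS])
  have "F \<in> facet ` S" using F S(3) by (simp add: Xi_face[OF S(1)])
  then obtain m where m: "F = facet m" "m \<in> S" by blast
  have mD: "m \<in> D k" using SD m by blast
  show ?thesis using m Psi_facet[OF mD] Psi_facet[OF psi_dom[OF mD]] psi_back[OF mD] by simp
qed

lemma Psi_self: "Psi \<omega> \<tau> k (facet k) = facet (\<omega> k)" unfolding Psi_def by simp

lemma SL_square:
  assumes g: "proper_face g" and gj: "g \<subseteq> facet j" and gk: "g \<subseteq> facet k" and jk: "j \<noteq> k"
  defines "k' \<equiv> psi j k" and "j' \<equiv> psi k j"
  shows "Psi \<omega> \<tau> j (facet k) = facet k'" "Psi \<omega> \<tau> k (facet j) = facet j'"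
    "\<And>p. p \<in> g \<Longrightarrow> \<tau> k' (\<tau> j p) = \<tau> j' (\<tau> k p)"
    "\<And>F. F \<in> Xi g \<Longrightarrow> Psi \<omega> \<tau> k' (Psi \<omega> \<tau> j F) = Psi \<omega> \<tau> j' (Psi \<omega> \<tau> k F)"
proof -
  obtain S where S: "distinct_abs S" "S \<noteq> {}" "g = face S" using g by (rule proper_faceE)
  have jS: "j \<in> S" using gj S face_sub_facet_iff by blast
  have kS: "k \<in> S" using gk S face_sub_facet_iff by blast
  have fjk: "fst j \<noteq> fst k" using S(1) jS kS jk unfolding distinct_abs_def by blast
  have SDj: "S \<subseteq> D j" by (rule distinct_sub_D[OF S(1) jS])
  have SDk: "S \<subseteq> D k" by (rule distinct_sub_D[OF S(1) kS])
  have kDj: "k \<in> D j" "j \<in> D k" using SDj SDk jS kS by auto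
  show e1: "Psi \<omega> \<tau> j (facet k) = facet k'" unfolding k'_def using Psi_facet kDj by blast
  show e2: "Psi \<omega> \<tau> k (facet j) = facet j'" unfolding j'_def using Psi_facet kDj by blast
  have Pj: "fst k' \<noteq> fst (\<omega> j)" "\<tau> j ` (facet j \<inter> facet k) = facet (\<omega> j) \<inter> facet k'"
    using psi_prop[OF fjk[symmetric]] unfolding k'_def by auto
  have Pk: "fst j' \<noteq> fst (\<omega> k)" "\<tau> k ` (facet k \<inter> facet j) = facet (\<omega> k) \<inter> facet j'"
    using psi_prop[OF fjk] unfolding j'_def by auto
  have Pk2: "\<tau> k ` (facet j \<inter> facet k) = facet j' \<inter> facet (\<omega> k)" using Pk(2) by (simp add: Int_commute)
  have cy: "\<tau> k' (\<tau> j p) = \<tau> j' (\<tau> k p)" if "p \<in> facet j \<inter> facet k" for p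
    by (rule cyc[OF fjk Pj(1) Pk(1) Pj(2) Pk2 that])
  show "\<And>p. p \<in> g \<Longrightarrow> \<tau> k' (\<tau> j p) = \<tau> j' (\<tau> k p)" using cy gj gk by blast
  define \<alpha> where "\<alpha> = psi k' \<circ> psi j"
  define \<beta> where "\<beta> = psi j' \<circ> psi k"
  have key: "\<alpha> ` T = \<beta> ` T \<and> inj_on \<alpha> T \<and> inj_on \<beta> T"
    if T: "T \<subseteq> S" "j \<in> T" "k \<in> T" for T
  proof -
    have dT: "distinct_abs T" using distinct_abs_subset[OF S(1) T(1)] .
    note Rj = R5'[OF dT T(2)]
    note Rk = R5'[OF dT T(3)]
    have k'T: "k' \<in> psi j ` T" unfolding k'_def using T(3) by blast
    have j'T: "j' \<in> psi k ` T" unfolding j'_def using T(2) by blast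
    note Rj2 = R5'[OF Rj(2) k'T]
    note Rk2 = R5'[OF Rk(2) j'T]
    have "\<tau> k' ` \<tau> j ` face T = \<tau> j' ` \<tau> k ` face T"
    proof -
      have sub: "face T \<subseteq> facet j \<inter> facet k" using T unfolding face_def by blast
      have "\<tau> k' ` \<tau> j ` face T = (\<lambda>p. \<tau> k' (\<tau> j p)) ` face T" by (simp add: image_image)
      also have "\<dots> = (\<lambda>p. \<tau> j' (\<tau> k p)) ` face T" using cy sub by (intro image_cong) auto
      also have "\<dots> = \<tau> j' ` \<tau> k ` face T" by (simp add: image_image)
      finally show ?thesis .
    qed
    hence "face (psi k' ` psi j ` T) = face (psi j' ` psi k ` T)"
      using Rj(1) Rk(1) Rj2(1) Rk2(1) by simp
    hence "psi k' ` psi j ` T = psi j' ` psi k ` T" by (rule face_eq_imp[OF Rj2(2) Rk2(2)])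
    hence i1: "\<alpha> ` T = \<beta> ` T" unfolding \<alpha>_def \<beta>_def by (simp add: image_comp)
    have TDj: "T \<subseteq> D j" using SDj T(1) by blast
    have TDk: "T \<subseteq> D k" using SDk T(1) by blast
    have "inj_on (psi j) T" using psi_inj TDj inj_on_subset by blast
    moreover have "inj_on (psi k') (psi j ` T)" using psi_inj distinct_sub_D[OF Rj(2) k'T] inj_on_subset by blast
    ultimately have i2: "inj_on \<alpha> T" unfolding \<alpha>_def by (rule comp_inj_on)
    have "inj_on (psi k) T" using psi_inj TDk inj_on_subset by blast
    moreover have "inj_on (psi j') (psi k ` T)" using psi_inj distinct_sub_D[OF Rk(2) j'T] inj_on_subset by blast
    ultimately have i3: "inj_on \<beta> T" unfolding \<beta>_def by (rule comp_inj_on)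
    show ?thesis using i1 i2 i3 by blast
  qed
  have K2: "\<alpha> ` {j,k} = \<beta> ` {j,k}" "inj_on \<alpha> {j,k}" "inj_on \<beta> {j,k}" using key[of "{j,k}"] jS kS by auto
  have mem: "\<alpha> x \<in> \<beta> ` T" if "\<alpha> ` T = \<beta> ` T" "x \<in> T" for x T
    using that by (metis imageI)
  have aj: "\<alpha> j = \<beta> j"
  proof (rule ccontr)
    assume ne: "\<alpha> j \<noteq> \<beta> j"
    have "\<alpha> j = \<beta> j \<or> \<alpha> j = \<beta> k" using mem[OF K2(1), of j] by simp
    hence ajbk: "\<alpha> j = \<beta> k" using ne by simp
    have "\<alpha> k \<noteq> \<alpha> j" using K2(2) jk unfolding inj_on_def by simp
    moreover have "\<alpha> k = \<beta> j \<or> \<alpha> k = \<beta> k" using mem[OF K2(1), of k] by simp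
    ultimately have "\<alpha> k = \<beta> j" using ajbk by simp
    hence "\<omega> k' = \<omega> j'" unfolding \<alpha>_def \<beta>_def k'_def j'_def by simp
    hence kj: "k' = j'" by (rule om_inj)
    have d1: "\<omega> j \<in> D k'" using Pj(1) unfolding D_def by auto
    have d2: "\<omega> k \<in> D k'" using Pk(1) kj unfolding D_def by auto
    have "psi k' (\<omega> j) = psi k' (\<omega> k)" using ajbk kj unfolding \<alpha>_def \<beta>_def k'_def j'_def by simp
    hence "\<omega> j = \<omega> k" using psi_inj[of k'] d1 d2 unfolding inj_on_def by blast
    hence "j = k" by (rule om_inj)
    thus False using jk by simp
  qed
  have ak: "\<alpha> k = \<beta> k"
  proof -
    have "\<alpha> k = \<beta> j \<or> \<alpha> k = \<beta> k" using mem[OF K2(1), of k] by simp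
    moreover have "\<alpha> k \<noteq> \<alpha> j" using K2(2) jk unfolding inj_on_def by simp
    ultimately show ?thesis using aj by auto
  qed
  have am: "\<alpha> m = \<beta> m" if mS: "m \<in> S" for m
  proof (cases "m = j \<or> m = k")
    case True thus ?thesis using aj ak by blast
  next
    case False
    have K3: "\<alpha> ` {j,k,m} = \<beta> ` {j,k,m}" "inj_on \<alpha> {j,k,m}"
      using key[of "{j,k,m}"] jS kS mS by auto
    have "\<alpha> m \<noteq> \<alpha> j" "\<alpha> m \<noteq> \<alpha> k" using K3(2) False unfolding inj_on_def by auto
    hence "\<alpha> m \<noteq> \<beta> j" "\<alpha> m \<noteq> \<beta> k" using aj ak by auto
    moreover have "\<alpha> m = \<beta> j \<or> \<alpha> m = \<beta> k \<or> \<alpha> m = \<beta> m" using mem[OF K3(1), of m] by simp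
    ultimately show ?thesis by simp
  qed
  show "\<And>F. F \<in> Xi g \<Longrightarrow> Psi \<omega> \<tau> k' (Psi \<omega> \<tau> j F) = Psi \<omega> \<tau> j' (Psi \<omega> \<tau> k F)"
  proof -
    fix F assume F: "F \<in> Xi g"
    have "F \<in> facet ` S" using F S(3) by (simp add: Xi_face[OF S(1)])
  then obtain m where m: "F = facet m" "m \<in> S" by blast
    have mj: "m \<in> D j" "m \<in> D k" using m SDj SDk by auto
    have R1: "distinct_abs (psi j ` S)" using R5'(2)[OF S(1) jS] .
    have R2: "distinct_abs (psi k ` S)" using R5'(2)[OF S(1) kS] .
    have m1: "psi j m \<in> D k'" using distinct_sub_D[OF R1, of k'] m(2) kS unfolding k'_def by blast
    have m2: "psi k m \<in> D j'" using distinct_sub_D[OF R2, of j'] m(2) jS unfolding j'_def by blast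
    have "Psi \<omega> \<tau> k' (Psi \<omega> \<tau> j F) = facet (\<alpha> m)"
      using m(1) Psi_facet[OF mj(1)] Psi_facet[OF m1] unfolding \<alpha>_def by simp
    moreover have "Psi \<omega> \<tau> j' (Psi \<omega> \<tau> k F) = facet (\<beta> m)"
      using m(1) Psi_facet[OF mj(2)] Psi_facet[OF m2] unfolding \<beta>_def by simp
    ultimately show "Psi \<omega> \<tau> k' (Psi \<omega> \<tau> j F) = Psi \<omega> \<tau> j' (Psi \<omega> \<tau> k F)" using am[OF m(2)] by simp
  qed
qed

end


lemma comp_seq_snoc: "comp_seq \<tau> (ks @ [k]) = \<tau> k \<circ> comp_seq \<tau> ks"
  by (induction ks) (auto simp: comp_assoc)

lemma Psi_seq_snoc: "Psi_seq \<omega> \<tau> (ks @ [k]) = Psi \<omega> \<tau> k \<circ> Psi_seq \<omega> \<tau> ks"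
  by (induction ks) (auto simp: comp_assoc)

lemma valid_seq_snoc: "valid_seq \<tau> f (ks @ [k]) \<longleftrightarrow> valid_seq \<tau> f ks \<and> comp_seq \<tau> ks ` f \<subseteq> facet k"
  by (induction ks arbitrary: f) (auto simp: image_comp)

locale fpf = fp +
  fixes f :: "(real^'a) set"
  assumes pf: "proper_face f"
begin

definition fc where "fc ks = comp_seq \<tau> ks ` f"
abbreviation lam where "lam ks \<equiv> Psi_seq \<omega> \<tau> ks"

definition Inv where
  "Inv ks \<longleftrightarrow> valid_seq \<tau> f ks \<and> proper_face (fc ks) \<and> bij_betw (lam ks) (Xi f) (Xi (fc ks))"

lemma Inv_Nil: "Inv []"
  unfolding Inv_def fc_def using pf by (simp add: bij_betw_id)

lemma Inv_snoc: "Inv ks \<Longrightarrow> fc ks \<subseteq> facet k \<Longrightarrow> Inv (ks @ [k])"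
proof -
  assume I: "Inv ks" and s: "fc ks \<subseteq> facet k"
  have fc2: "fc (ks @ [k]) = \<tau> k ` fc ks" unfolding fc_def comp_seq_snoc by (simp add: image_comp)
  have v: "valid_seq \<tau> f (ks @ [k])" using I s unfolding Inv_def fc_def valid_seq_snoc by simp
  have p: "proper_face (fc (ks @ [k]))" unfolding fc2 using I s SL_face unfolding Inv_def by blast
  have "bij_betw (Psi \<omega> \<tau> k \<circ> lam ks) (Xi f) (Xi (\<tau> k ` fc ks))"
    using I s SL_bij bij_betw_trans unfolding Inv_def by blast
  thus ?thesis using v p fc2 unfolding Inv_def Psi_seq_snoc by simp
qed

definition idx :: "(real^'a) set \<Rightarrow> 'a sidx" where "idx G = (SOME k. facet k = G)"
lemma idx_facet[simp]: "idx (facet k) = k"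
  unfolding idx_def by (rule some_equality) (auto intro: facet_inj)

definition step where "step ks a = ks @ [idx (lam ks a)]"

lemma lam_in: "Inv ks \<Longrightarrow> a \<in> Xi f \<Longrightarrow> lam ks a \<in> Xi (fc ks)"
  unfolding Inv_def bij_betw_def by blast

lemma step_eq:
  assumes "Inv ks" "a \<in> Xi f" obtains m where "lam ks a = facet m" "fc ks \<subseteq> facet m" "step ks a = ks @ [m]"
proof -
  have "lam ks a \<in> Xi (fc ks)" by (rule lam_in[OF assms])
  then obtain m where m: "lam ks a = facet m" "fc ks \<subseteq> facet m" unfolding Xi_def by blast
  hence "step ks a = ks @ [m]" unfolding step_def by simp
  with m that show ?thesis by blast
qed

lemma Inv_step: "Inv ks \<Longrightarrow> a \<in> Xi f \<Longrightarrow> Inv (step ks a)"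
  by (metis step_eq Inv_snoc)

definition E where
  "E ks1 ks2 \<longleftrightarrow> Inv ks1 \<and> Inv ks2 \<and> (\<forall>p\<in>f. comp_seq \<tau> ks1 p = comp_seq \<tau> ks2 p)
     \<and> (\<forall>F\<in>Xi f. lam ks1 F = lam ks2 F)"

lemma E_refl: "Inv ks \<Longrightarrow> E ks ks" unfolding E_def by simp
lemma E_sym: "E a b \<Longrightarrow> E b a" unfolding E_def by simp
lemma E_trans: "E a b \<Longrightarrow> E b c \<Longrightarrow> E a c" unfolding E_def by simp
lemma E_fc: "E a b \<Longrightarrow> fc a = fc b" unfolding E_def fc_def by (auto intro: image_cong)

lemma E_step: "E ks1 ks2 \<Longrightarrow> a \<in> Xi f \<Longrightarrow> E (step ks1 a) (step ks2 a)"
proof -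
  assume e: "E ks1 ks2" and a: "a \<in> Xi f"
  have "lam ks1 a = lam ks2 a" using e a unfolding E_def by blast
  note eq = this
  have I1: "Inv (step ks1 a)" "Inv (step ks2 a)" using e a Inv_step unfolding E_def by auto
  show ?thesis using e I1 unfolding E_def step_def by (simp add: comp_seq_snoc Psi_seq_snoc eq)
qed

lemma E_cancel:
  assumes I: "Inv ks" and a: "a \<in> Xi f"
  shows "E (step (step ks a) a) ks"
proof -
  obtain m where m: "lam ks a = facet m" "fc ks \<subseteq> facet m" "step ks a = ks @ [m]" using step_eq[OF I a] .
  have "lam (ks @ [m]) a = facet (\<omega> m)" using m(1) by (simp add: Psi_seq_snoc Psi_self)
  hence s2: "step (step ks a) a = ks @ [m, \<omega> m]" using m(3) by (simp add: step_def)
  have I2: "Inv (step (step ks a) a)" using Inv_step[OF Inv_step[OF I a] a] .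
  have pf': "proper_face (fc ks)" using I unfolding Inv_def by blast
  have c: "comp_seq \<tau> (ks @ [m, \<omega> m]) p = comp_seq \<tau> ks p" if p: "p \<in> f" for p
  proof -
    have "comp_seq \<tau> ks p \<in> facet m" using m(2) p unfolding fc_def by blast
    thus ?thesis using t_back by (simp add: comp_seq_snoc[where ks = "ks @ [m]", simplified] comp_seq_snoc)
  qed
  have l: "lam (ks @ [m, \<omega> m]) F = lam ks F" if F: "F \<in> Xi f" for F
  proof -
    have "lam ks F \<in> Xi (fc ks)" by (rule lam_in[OF I F])
    hence "Psi \<omega> \<tau> (\<omega> m) (Psi \<omega> \<tau> m (lam ks F)) = lam ks F" by (rule SL_cancel[OF pf' m(2)])
    thus ?thesis by (simp add: Psi_seq_snoc[where ks = "ks @ [m]", simplified] Psi_seq_snoc)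
  qed
  show ?thesis unfolding E_def using I2 I c l s2 by simp
qed

lemma E_swap:
  assumes I: "Inv ks" and a: "a \<in> Xi f" and b: "b \<in> Xi f" and ab: "a \<noteq> b"
  shows "E (step (step ks a) b) (step (step ks b) a)"
proof -
  obtain j where j: "lam ks a = facet j" "fc ks \<subseteq> facet j" "step ks a = ks @ [j]" using step_eq[OF I a] .
  obtain k where k: "lam ks b = facet k" "fc ks \<subseteq> facet k" "step ks b = ks @ [k]" using step_eq[OF I b] .
  have jk: "j \<noteq> k"
  proof
    assume "j = k"
    hence "lam ks a = lam ks b" using j k by simp
    thus False using I a b ab unfolding Inv_def bij_betw_def inj_on_def by blast
  qed
  have pf': "proper_face (fc ks)" using I unfolding Inv_def by blast
  note SQ = SL_square[OF pf' j(2) k(2) jk]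
  have "lam (ks @ [j]) b = facet (psi j k)" using k(1) SQ(1) by (simp add: Psi_seq_snoc)
  hence s1: "step (step ks a) b = ks @ [j, psi j k]" using j(3) by (simp add: step_def)
  have "lam (ks @ [k]) a = facet (psi k j)" using j(1) SQ(2) by (simp add: Psi_seq_snoc)
  hence s2: "step (step ks b) a = ks @ [k, psi k j]" using k(3) by (simp add: step_def)
  have I1: "Inv (step (step ks a) b)" using Inv_step[OF Inv_step[OF I a] b] .
  have I2: "Inv (step (step ks b) a)" using Inv_step[OF Inv_step[OF I b] a] .
  have c: "comp_seq \<tau> (ks @ [j, psi j k]) p = comp_seq \<tau> (ks @ [k, psi k j]) p" if p: "p \<in> f" for p
  proof -
    have "comp_seq \<tau> ks p \<in> fc ks" using p unfolding fc_def by blast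
    hence "\<tau> (psi j k) (\<tau> j (comp_seq \<tau> ks p)) = \<tau> (psi k j) (\<tau> k (comp_seq \<tau> ks p))" by (rule SQ(3))
    thus ?thesis by (simp add: comp_seq_snoc[where ks = "ks @ [_]", simplified] comp_seq_snoc)
  qed
  have l: "lam (ks @ [j, psi j k]) F = lam (ks @ [k, psi k j]) F" if F: "F \<in> Xi f" for F
  proof -
    have "lam ks F \<in> Xi (fc ks)" by (rule lam_in[OF I F])
    hence "Psi \<omega> \<tau> (psi j k) (Psi \<omega> \<tau> j (lam ks F)) = Psi \<omega> \<tau> (psi k j) (Psi \<omega> \<tau> k (lam ks F))" by (rule SQ(4))
    thus ?thesis by (simp add: Psi_seq_snoc[where ks = "ks @ [_]", simplified] Psi_seq_snoc)
  qed
  show ?thesis unfolding E_def using I1 I2 c l s1 s2 by simp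
qed

end


context fpf begin

fun rn where
  "rn ks [] = ks"
| "rn ks (a # L) = rn (step ks a) L"

lemma rn_append: "rn ks (L @ M) = rn (rn ks L) M"
  by (induction L arbitrary: ks) auto

lemma Inv_rn: "Inv ks \<Longrightarrow> set L \<subseteq> Xi f \<Longrightarrow> Inv (rn ks L)"
  by (induction L arbitrary: ks) (auto intro: Inv_step)

lemma E_rn: "E ks1 ks2 \<Longrightarrow> set L \<subseteq> Xi f \<Longrightarrow> E (rn ks1 L) (rn ks2 L)"
  by (induction L arbitrary: ks1 ks2) (auto intro: E_step)

lemma E_Inv: "E a b \<Longrightarrow> Inv a" "E a b \<Longrightarrow> Inv b" unfolding E_def by auto

lemma Move: "Inv ks \<Longrightarrow> set M \<subseteq> Xi f \<Longrightarrow> a \<in> Xi f \<Longrightarrow> a \<notin> set M \<Longrightarrow>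
   E (rn ks (M @ [a])) (rn ks (a # M))"
proof (induction M arbitrary: ks)
  case Nil thus ?case by (simp add: E_refl Inv_step)
next
  case (Cons b M)
  have b: "b \<in> Xi f" "set M \<subseteq> Xi f" "a \<noteq> b" "a \<notin> set M" using Cons.prems by auto
  have I1: "Inv (step ks b)" using Inv_step Cons.prems(1) b(1) .
  have e1: "E (rn (step ks b) (M @ [a])) (rn (step ks b) (a # M))"
    by (rule Cons.IH[OF I1 b(2) Cons.prems(3) b(4)])
  have e2: "E (step (step ks b) a) (step (step ks a) b)"
    by (rule E_swap[OF Cons.prems(1) b(1) Cons.prems(3)]) (use b(3) in auto)
  have e3: "E (rn (step (step ks b) a) M) (rn (step (step ks a) b) M)" by (rule E_rn[OF e2 b(2)])
  show ?case using E_trans[OF e1] e3 by simp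
qed

definition AL where "AL = (SOME l. set l = Xi f \<and> distinct l)"

lemma finite_Xi: "finite (Xi f)"
proof -
  have "Xi f \<subseteq> range facet" unfolding Xi_def by blast
  thus ?thesis by (rule finite_subset) simp
qed

lemma AL: "distinct AL" "set AL = Xi f"
  using someI_ex[OF finite_distinct_list[OF finite_Xi]] unfolding AL_def by auto

definition canon where "canon P = filter (\<lambda>x. x \<in> P) AL"

lemma canon_set: "set (canon P) \<subseteq> Xi f" unfolding canon_def using AL by auto

lemma Toggle:
  assumes a: "a \<in> Xi f"
  shows "E (rn [] (canon P @ [a])) (rn [] (canon ((P - {a}) \<union> ({a} - P))))"
proof -
  obtain A1 A2 where A: "AL = A1 @ a # A2" using a AL(2) split_list by metis
  have na: "a \<notin> set A1" "a \<notin> set A2" using AL(1) A by auto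
  define Q where "Q = (P - {a}) \<union> ({a} - P)"
  define L1 where "L1 = filter (\<lambda>x. x \<in> P) A1"
  define M where "M = filter (\<lambda>x. x \<in> P) A2"
  have q1: "filter (\<lambda>x. x \<in> Q) A1 = L1" unfolding L1_def Q_def using na(1)
    by (intro filter_cong) auto
  have q2: "filter (\<lambda>x. x \<in> Q) A2 = M" unfolding M_def Q_def using na(2)
    by (intro filter_cong) auto
  have setA: "set A1 \<subseteq> Xi f" "set A2 \<subseteq> Xi f" using AL(2) A by auto
  have sL1: "set L1 \<subseteq> Xi f" using setA unfolding L1_def by auto
  have sM: "set M \<subseteq> Xi f" "a \<notin> set M" using setA na unfolding M_def by auto
  have IL1: "Inv (rn [] L1)" using Inv_rn[OF Inv_Nil sL1] .
  show ?thesis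
  proof (cases "a \<in> P")
    case True
    have cP: "canon P = L1 @ a # M" unfolding canon_def A L1_def M_def using True by simp
    have cQ: "canon Q = L1 @ M" unfolding canon_def A using q1 q2 True unfolding Q_def by simp
    have I2: "Inv (rn [] (L1 @ [a]))" using Inv_rn[OF Inv_Nil, of "L1 @ [a]"] sL1 a by auto
    have "rn [] (canon P @ [a]) = rn (rn [] (L1 @ [a])) (M @ [a])" unfolding cP by (simp add: rn_append)
    moreover have "E (rn (rn [] (L1 @ [a])) (M @ [a])) (rn (rn [] (L1 @ [a])) (a # M))"
      by (rule Move[OF I2 sM(1) a sM(2)])
    moreover have "rn (rn [] (L1 @ [a])) (a # M) = rn (step (step (rn [] L1) a) a) M"
      by (simp add: rn_append)
    moreover have "E (rn (step (step (rn [] L1) a) a) M) (rn (rn [] L1) M)"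
      by (rule E_rn[OF E_cancel[OF IL1 a] sM(1)])
    moreover have "rn (rn [] L1) M = rn [] (canon Q)" unfolding cQ by (simp add: rn_append)
    ultimately show ?thesis unfolding Q_def by (metis E_trans)
  next
    case False
    have cP: "canon P = L1 @ M" unfolding canon_def A L1_def M_def using False by simp
    have cQ: "canon Q = L1 @ a # M" unfolding canon_def A using q1 q2 False unfolding Q_def by simp
    have "rn [] (canon P @ [a]) = rn (rn [] L1) (M @ [a])" unfolding cP by (simp add: rn_append)
    moreover have "E (rn (rn [] L1) (M @ [a])) (rn (rn [] L1) (a # M))"
      by (rule Move[OF IL1 sM(1) a sM(2)])
    moreover have "rn (rn [] L1) (a # M) = rn [] (canon Q)" unfolding cQ by (simp add: rn_append)
    ultimately show ?thesis unfolding Q_def by metis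
  qed
qed

lemma Claim: "valid_seq \<tau> f ks \<Longrightarrow> \<exists>P \<subseteq> Xi f. E ks (rn [] (canon P))"
proof (induction ks rule: rev_induct)
  case Nil
  have "canon {} = []" unfolding canon_def by simp
  thus ?case using E_refl[OF Inv_Nil] by (intro exI[of _ "{}"]) simp
next
  case (snoc k ks)
  have v: "valid_seq \<tau> f ks" "fc ks \<subseteq> facet k" using snoc.prems unfolding valid_seq_snoc fc_def by auto
  obtain P where P: "P \<subseteq> Xi f" "E ks (rn [] (canon P))" using snoc.IH[OF v(1)] by blast
  have I: "Inv ks" using P(2) E_Inv by blast
  have "facet k \<in> Xi (fc ks)" using v(2) unfolding Xi_def by blast
  then obtain a where a: "a \<in> Xi f" "lam ks a = facet k"
    using I unfolding Inv_def bij_betw_def by (metis imageE)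
  have st: "step ks a = ks @ [k]" unfolding step_def using a(2) by simp
  have e1: "E (ks @ [k]) (step (rn [] (canon P)) a)" using E_step[OF P(2) a(1)] st by simp
  have "step (rn [] (canon P)) a = rn [] (canon P @ [a])" by (simp add: rn_append)
  hence e2: "E (ks @ [k]) (rn [] (canon ((P - {a}) \<union> ({a} - P))))"
    using E_trans[OF e1] Toggle[OF a(1), of P] by simp
  moreover have "(P - {a}) \<union> ({a} - P) \<subseteq> Xi f" using P(1) a(1) by blast
  ultimately show ?case by blast
qed

lemma card_Xi: "card (Xi f) = codim f"
proof -
  obtain S where S: "distinct_abs S" "S \<noteq> {}" "f = face S" using pf by (rule proper_faceE)
  have "card (Xi f) = card (facet ` S)" using S(3) Xi_face[OF S(1)] by simp
  also have "\<dots> = card S" by (rule card_image) (auto intro: inj_onI facet_inj)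
  also have "\<dots> = codim f" using S(3) codim_face[OF S(1)] by simp
  finally show ?thesis .
qed

lemma main_local:
  assumes perf: "card (face_family \<tau> f) = 2 ^ codim f"
    and v1: "valid_seq \<tau> f ks" and v2: "valid_seq \<tau> f ks'"
    and eq: "comp_seq \<tau> ks ` f = comp_seq \<tau> ks' ` f"
  shows "E ks ks'"
proof -
  define h where "h P = fc (rn [] (canon P))" for P
  have fam: "face_family \<tau> f = h ` Pow (Xi f)"
  proof
    show "face_family \<tau> f \<subseteq> h ` Pow (Xi f)"
    proof
      fix x assume "x \<in> face_family \<tau> f"
      then obtain ks0 where k0: "x = comp_seq \<tau> ks0 ` f" "valid_seq \<tau> f ks0" unfolding face_family_def by blast
      obtain P where P: "P \<subseteq> Xi f" "E ks0 (rn [] (canon P))" using Claim[OF k0(2)] by blast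
      have "x = h P" using E_fc[OF P(2)] k0(1) unfolding h_def fc_def by simp
      thus "x \<in> h ` Pow (Xi f)" using P(1) by blast
    qed
  next
    show "h ` Pow (Xi f) \<subseteq> face_family \<tau> f"
    proof
      fix x assume "x \<in> h ` Pow (Xi f)"
      then obtain P where P: "P \<subseteq> Xi f" "x = h P" by blast
      have "Inv (rn [] (canon P))" using Inv_rn[OF Inv_Nil canon_set] .
      thus "x \<in> face_family \<tau> f" unfolding face_family_def h_def P(2) Inv_def fc_def by blast
    qed
  qed
  have "card (h ` Pow (Xi f)) = card (Pow (Xi f))"
    using perf fam card_Pow[of "Xi f"] card_Xi finite_Xi by simp
  hence inj: "inj_on h (Pow (Xi f))" using eq_card_imp_inj_on finite_Pow_iff finite_Xi by blast
  obtain P where P: "P \<subseteq> Xi f" "E ks (rn [] (canon P))" using Claim[OF v1] by blast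
  obtain P' where P': "P' \<subseteq> Xi f" "E ks' (rn [] (canon P'))" using Claim[OF v2] by blast
  have "h P = h P'" using E_fc[OF P(2)] E_fc[OF P'(2)] eq unfolding h_def fc_def by simp
  hence "P = P'" using inj P(1) P'(1) unfolding inj_on_def by blast
  thus ?thesis using P(2) P'(2) E_trans E_sym by blast
qed

end

theorem mainTheorem4:
  fixes \<omega> :: "'n::finite sidx \<Rightarrow> 'n sidx"
    and \<tau> :: "'n sidx \<Rightarrow> real^'n \<Rightarrow> real^'n"
  assumes "regular_fp \<omega> \<tau>"
    and "perfect \<tau>"
  shows "strong \<omega> \<tau>"
  unfolding strong_def
proof (intro allI impI)
  fix f ks ks'
  assume h: "proper_face f \<and> valid_seq \<tau> f ks \<and> valid_seq \<tau> f ks' \<and> comp_seq \<tau> ks ` f = comp_seq \<tau> ks' ` f"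
  have FP: "facets_pairing \<omega> \<tau>" using assms(1) unfolding regular_fp_def by blast
  interpret fpf \<omega> \<tau> f using FP h by unfold_locales auto
  have "card (face_family \<tau> f) = 2 ^ codim f" using assms(2) h unfolding perfect_def by blast
  hence "E ks ks'" using main_local h by blast
  thus "(\<forall>p\<in>f. comp_seq \<tau> ks p = comp_seq \<tau> ks' p) \<and> (\<forall>F\<in>Xi f. Psi_seq \<omega> \<tau> ks F = Psi_seq \<omega> \<tau> ks' F)"
    unfolding E_def by blast
qed


end
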